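(* Every unicellular fatgraph $\mathbb{G}$ of (Euler) genus $g$ satisfies $d(\mathbb{G})\ge g$.
   Context: A (rooted) fatgraph with $n$ ribbons is $\mathbb{G}=([2n+1],\sigma,\gamma,\omega)$: sectors $[2n+1]$; permutations $\sigma,\gamma$ whose cycles are vertices and boundary components, $\sigma(2n+1)=\gamma(2n+1)=1$; orientations $\omega:[2n+1]\to\{\pm1\}$ with $\omega(1)=\omega(2n+1)$; the pairs $(x,\sigma(x))$, $x\ne2n+1$, are matched into ribbons $((x,\sigma(x)),(y,\sigma(y)))$, untwisted ($x,\sigma(y)$ and $\sigma(x),y$ $\gamma$-consecutive, $\omega(x)=\omega(\sigma(y))$, $\omega(\sigma(x))=\omega(y)$) or twisted ($x,y$ and $\sigma(x),\sigma(y)$ $\gamma$-consecutive, $\omega(x)=-\omega(y)$, $\omega(\sigma(x))=-\omega(\sigma(y))$). Flipping a vertex reverses its cyclic order and negates its sectors' orientations. Euler genus: $2-g=v-e+b$ ($v$ vertices, $e$ ribbons, $b$ boundary components). Unicellular: $\gamma=(1,\dots,2n+1)$ with order $<_\gamma$. Reversals for sectors $i<_\gamma j$: gluing (distinct vertices $(i,i_1,\dots,i_p),(j,j_1,\dots,j_q)$, after flipping $\omega(i)=-\omega(j)$, become $(i,j_1,\dots,j_q,j,i_1,\dots,i_p)$); slicing (vertex $(i,j_1,\dots,j_q,j,i_1,\dots,i_p)$ with $\omega(i)=-\omega(j)$ becomes $(i,i_1,\dots,i_p)$, $(j,j_1,\dots,j_q)$); half-flipping (same vertex with $\omega(i)=\omega(j)$: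 split, flip $(j,j_1,\dots,j_q)$, glue back along $i,j$, giving $(i,j_q,\dots,j_1,j,i_1,\dots,i_p)$). The r-distance $d(\mathbb{G})$ is the minimum number of reversals transforming $\mathbb{G}$ into a unicellular fatgraph of genus $0$ (a plane tree). *)

theory Defs
  imports "HOL-Combinatorics.Permutations" "HOL-Library.Extended_Nat"
begin

text \<open>A rooted fatgraph with n ribbons: sectors {1..2n+1}, vertex permutation sigma,
 boundary permutation gamma, orientations omega with values +1/-1.\<close>

record fatgraph =
  nrib :: nat
  sig  :: "nat \<Rightarrow> nat"
  gam  :: "nat \<Rightarrow> nat"
  ome  :: "nat \<Rightarrow> int"

definition sectors :: "fatgraph \<Rightarrow> nat set" where
  "sectors G = {1..2 * nrib G + 1}"

definition gcons :: "(nat \<Rightarrow> nat) \<Rightarrow> nat \<Rightarrow> nat \<Rightarrow> bool" where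
  "gcons g a b \<longleftrightarrow> g a = b \<or> g b = a"

text \<open>Ribbon formed by the pairs (x, sigma x) and (y, sigma y).\<close>
definition untwisted_ribbon :: "fatgraph \<Rightarrow> nat \<Rightarrow> nat \<Rightarrow> bool" where
  "untwisted_ribbon G x y \<longleftrightarrow>
     gcons (gam G) x (sig G y) \<and> gcons (gam G) (sig G x) y \<and>
     ome G x = ome G (sig G y) \<and> ome G (sig G x) = ome G y"

definition twisted_ribbon :: "fatgraph \<Rightarrow> nat \<Rightarrow> nat \<Rightarrow> bool" where
  "twisted_ribbon G x y \<longleftrightarrow>
     gcons (gam G) x y \<and> gcons (gam G) (sig G x) (sig G y) \<and>
     ome G x = - ome G y \<and> ome G (sig G x) = - ome G (sig G y)"

text \<open>The pairs (x, sigma x), x in {1..2n} (i.e. x \<noteq> 2n+1), are matched into ribbons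
  by a fixed-point-free involution rho on {1..2n}.\<close>
definition is_fatgraph :: "fatgraph \<Rightarrow> bool" where
  "is_fatgraph G \<longleftrightarrow>
     (let n = nrib G; S = sectors G in
       sig G permutes S \<and> gam G permutes S \<and>
       sig G (2 * n + 1) = 1 \<and> gam G (2 * n + 1) = 1 \<and>
       (\<forall>x\<in>S. ome G x = 1 \<or> ome G x = -1) \<and>
       ome G 1 = ome G (2 * n + 1) \<and>
       (\<exists>rho :: nat \<Rightarrow> nat.
          (\<forall>x\<in>{1..2 * n}. rho x \<in> {1..2 * n} \<and> rho x \<noteq> x \<and> rho (rho x) = x \<and>
             (untwisted_ribbon G x (rho x) \<or> twisted_ribbon G x (rho x)))))"

definition cyc :: "(nat \<Rightarrow> nat) \<Rightarrow> nat \<Rightarrow> nat set" where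
  "cyc f x = {(f ^^ k) x | k. True}"

definition num_vertices :: "fatgraph \<Rightarrow> nat" where
  "num_vertices G = card (cyc (sig G) ` sectors G)"

definition num_boundaries :: "fatgraph \<Rightarrow> nat" where
  "num_boundaries G = card (cyc (gam G) ` sectors G)"

definition euler_genus :: "fatgraph \<Rightarrow> int" where
  "euler_genus G = 2 - int (num_vertices G) + int (nrib G) - int (num_boundaries G)"

definition unicellular :: "fatgraph \<Rightarrow> bool" where
  "unicellular G \<longleftrightarrow>
     gam G = (\<lambda>x. if x \<in> sectors G then (if x = 2 * nrib G + 1 then 1 else x + 1) else x)"

text \<open>Order along the boundary cycle starting at sector 1 (for unicellular G this is
  the order of 1 < 2 < ... < 2n+1).\<close>
definition gamma_less :: "fatgraph \<Rightarrow> nat \<Rightarrow> nat \<Rightarrow> bool" where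
  "gamma_less G i j \<longleftrightarrow>
     (\<exists>m k. m < k \<and> k \<le> 2 * nrib G \<and> i = (gam G ^^ m) 1 \<and> j = (gam G ^^ k) 1)"

definition flip_vertex :: "nat set \<Rightarrow> fatgraph \<Rightarrow> fatgraph" where
  "flip_vertex C G = G\<lparr> sig := (\<lambda>x. if x \<in> C then inv (sig G) x else sig G x),
                        ome := (\<lambda>x. if x \<in> C then - ome G x else ome G x) \<rparr>"

definition flip_if :: "bool \<Rightarrow> nat \<Rightarrow> fatgraph \<Rightarrow> fatgraph" where
  "flip_if b x G = (if b then flip_vertex (cyc (sig G) x) G else G)"

text \<open>Exchange the successors of i and j in sigma: this merges the cycles
  (i,i1..ip),(j,j1..jq) into (i,j1..jq,j,i1..ip), and conversely splits.\<close>
definition swap_succ :: "nat \<Rightarrow> nat \<Rightarrow> fatgraph \<Rightarrow> fatgraph" where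
  "swap_succ i j G = G\<lparr> sig := (sig G)(i := sig G j, j := sig G i) \<rparr>"

definition gluing :: "fatgraph \<Rightarrow> nat \<Rightarrow> nat \<Rightarrow> fatgraph \<Rightarrow> bool" where
  "gluing G i j H \<longleftrightarrow> cyc (sig G) i \<noteq> cyc (sig G) j \<and>
     (\<exists>fi fj. let G1 = flip_if fj j (flip_if fi i G) in
        ome G1 i = - ome G1 j \<and> H = swap_succ i j G1)"

definition slicing :: "fatgraph \<Rightarrow> nat \<Rightarrow> nat \<Rightarrow> fatgraph \<Rightarrow> bool" where
  "slicing G i j H \<longleftrightarrow> cyc (sig G) i = cyc (sig G) j \<and> ome G i = - ome G j \<and>
     H = swap_succ i j G"

definition half_flipping :: "fatgraph \<Rightarrow> nat \<Rightarrow> nat \<Rightarrow> fatgraph \<Rightarrow> bool" where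
  "half_flipping G i j H \<longleftrightarrow> cyc (sig G) i = cyc (sig G) j \<and> ome G i = ome G j \<and>
     H = swap_succ i j (flip_if True j (swap_succ i j G))"

definition reversal :: "fatgraph \<Rightarrow> fatgraph \<Rightarrow> bool" where
  "reversal G H \<longleftrightarrow> is_fatgraph G \<and> is_fatgraph H \<and>
     (\<exists>i\<in>sectors G. \<exists>j\<in>sectors G. gamma_less G i j \<and>
        (gluing G i j H \<or> slicing G i j H \<or> half_flipping G i j H))"

definition plane_tree :: "fatgraph \<Rightarrow> bool" where
  "plane_tree H \<longleftrightarrow> is_fatgraph H \<and> unicellular H \<and> euler_genus H = 0"

text \<open>r-distance: minimal number of reversals to reach a plane tree (\<infinity> if impossible).\<close>
definition r_distance :: "fatgraph \<Rightarrow> enat" where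
  "r_distance G = (INF k \<in> {k. \<exists>H. (reversal ^^ k) G H \<and> plane_tree H}. enat k)"

end

theory Submission
  imports Defs "HOL-Combinatorics.Orbits"
begin

lemma cyc_orbit: "permutation f \<Longrightarrow> cyc f x = orbit f x"
  by (simp add: cyc_def orbit_altdef_permutation)

lemma self_cyc: "x \<in> cyc f x"
  unfolding cyc_def by (auto intro: exI[where x=0])

lemma cyc_eq_iff: "permutation f \<Longrightarrow> cyc f x = cyc f y \<longleftrightarrow> y \<in> cyc f x"
proof -
  assume p: "permutation f"
  have s: "\<And>z. z \<in> orbit f z" using p by (rule permutation_self_in_orbit)
  show ?thesis unfolding cyc_orbit[OF p]
  proof
    assume "orbit f x = orbit f y" then show "y \<in> orbit f x" using s by blast
  next
    assume y: "y \<in> orbit f x"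
    then have x: "x \<in> orbit f y" using s orbit_swap by metis
    show "orbit f x = orbit f y"
      using y x by (auto intro: orbit_trans)
  qed
qed

lemma cyc_sym: "permutation f \<Longrightarrow> y \<in> cyc f x \<Longrightarrow> x \<in> cyc f y"
  using cyc_eq_iff self_cyc by metis

lemma funpow_cyc: "(f ^^ k) x \<in> cyc f x"
  unfolding cyc_def by auto

lemma cyc_closed: "y \<in> cyc f x \<Longrightarrow> f y \<in> cyc f x"
  unfolding cyc_def by (auto intro: exI[where x="Suc k" for k])

lemma iter_agree:
  assumes "\<And>k. (f ^^ k) x \<in> D" "\<And>y. y \<in> D \<Longrightarrow> g y = f y"
  shows "(g ^^ k) x = (f ^^ k) x"
  using assms by (induction k) auto

lemma cyc_agree:
  assumes "\<And>k. (f ^^ k) x \<in> D" "\<And>y. y \<in> D \<Longrightarrow> g y = f y"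
  shows "cyc g x = cyc f x"
  unfolding cyc_def using iter_agree[OF assms] by simp

lemma sw_eq: "f(i := f j, j := f i) = f \<circ> transpose i j"
  by (auto simp: fun_eq_iff transpose_def)

lemma perm_sw: "permutation f \<Longrightarrow> permutation (f(i := f j, j := f i))"
  unfolding sw_eq by (intro permutation_compose permutation_swap_id)

lemma swap_count:
  assumes p: "permutation f" and fin: "finite S" and ij: "i \<in> S" "j \<in> S"
  defines "f' \<equiv> f(i := f j, j := f i)"
  shows "card (cyc f' ` S) + card (cyc f ` {i,j}) \<le> card (cyc f ` S) + card (cyc f' ` {i,j})"
proof -
  have p': "permutation f'" unfolding f'_def by (rule perm_sw[OF p])
  define A where "A = cyc f i \<union> cyc f j"
  have agree: "\<And>y. y \<in> - {i,j} \<Longrightarrow> f' y = f y" unfolding f'_def by auto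
  have out: "cyc f' x = cyc f x" if "x \<notin> A" for x
  proof (rule cyc_agree[OF _ agree])
    fix k show "(f ^^ k) x \<in> - {i, j}"
    proof
      assume "(f ^^ k) x \<in> {i,j}"
      then have "i \<in> cyc f x \<or> j \<in> cyc f x" using funpow_cyc[of k f x] by auto
      then have "x \<in> A" unfolding A_def using cyc_sym[OF p] by blast
      with that show False by simp
    qed
  qed
  have inA: "cyc f' x \<in> cyc f' ` {i,j}" if "x \<in> A" for x
  proof (rule ccontr)
    assume n: "cyc f' x \<notin> cyc f' ` {i,j}"
    have ni: "i \<notin> cyc f' x \<and> j \<notin> cyc f' x"
      using n cyc_eq_iff[OF p'] by blast
    have "cyc f x = cyc f' x"
    proof (rule cyc_agree)
      fix k show "(f' ^^ k) x \<in> - {i, j}" using ni funpow_cyc[of k f' x] by auto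
    next
      fix y assume "y \<in> - {i,j}" then show "f y = f' y" using agree by simp
    qed
    moreover have "i \<in> cyc f x \<or> j \<in> cyc f x"
      using that unfolding A_def using cyc_sym[OF p] by blast
    ultimately show False using ni by simp
  qed
  have sub: "cyc f' ` S \<subseteq> cyc f ` (S - A) \<union> cyc f' ` {i,j}"
    using out inA by blast
  have "card (cyc f' ` S) \<le> card (cyc f ` (S - A) \<union> cyc f' ` {i,j})"
    by (rule card_mono) (use sub fin in auto)
  also have "\<dots> \<le> card (cyc f ` (S - A)) + card (cyc f' ` {i,j})"
    by (rule card_Un_le)
  finally have 1: "card (cyc f' ` S) \<le> card (cyc f ` (S - A)) + card (cyc f' ` {i,j})" .
  have eqS: "cyc f ` S = cyc f ` (S - A) \<union> cyc f ` {i,j}"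
  proof -
    have "cyc f x \<in> cyc f ` {i,j}" if "x \<in> A" for x
      using that unfolding A_def using cyc_eq_iff[OF p] cyc_sym[OF p] by blast
    then show ?thesis using ij by blast
  qed
  have disj: "cyc f ` (S - A) \<inter> cyc f ` {i,j} = {}"
  proof -
    have "cyc f x \<noteq> cyc f y" if "x \<notin> A" "y \<in> {i,j}" for x y
      using that self_cyc[of x f] unfolding A_def by auto
    then show ?thesis by blast
  qed
  have 2: "card (cyc f ` S) = card (cyc f ` (S - A)) + card (cyc f ` {i,j})"
    unfolding eqS by (rule card_Un_disjoint) (use fin disj in auto)
  show ?thesis using 1 2 by simp
qed

lemma flip_props:
  fixes y :: nat
  assumes p: "permutation f"
  defines "C \<equiv> cyc f y"
  defines "f2 \<equiv> (\<lambda>x. if x \<in> C then inv f x else f x)"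
  shows "permutation f2 \<and> cyc f2 = cyc f"
proof -
  have b: "bij f" using p by (rule permutation_bijective)
  have pi: "permutation (inv f)" using p by (rule permutation_inverse)
  have ci: "cyc (inv f) x = cyc f x" for x
    using cyc_orbit[OF p] cyc_orbit[OF pi] orbit_inv_eq[OF p] by simp
  have invl: "inv f (f x) = x" for x using b by (simp add: bij_is_inj)
  have invr: "f (inv f x) = x" for x using b by (simp add: bij_is_surj surj_f_inv_f)
  have Cf: "f x \<in> C \<longleftrightarrow> x \<in> C" for x
  proof
    assume "x \<in> C" then show "f x \<in> C" unfolding C_def by (rule cyc_closed)
  next
    assume "f x \<in> C"
    then have "inv f (f x) \<in> C" unfolding C_def using cyc_closed[of "f x" "inv f" y] ci by simp
    then show "x \<in> C" using invl by simp
  qed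
  have Ci: "inv f x \<in> C \<longleftrightarrow> x \<in> C" for x using Cf[of "inv f x"] invr by simp
  have cy: "cyc f2 x = cyc f x" for x
  proof (cases "x \<in> C")
    case True
    have "cyc f2 x = cyc (inv f) x"
    proof (rule cyc_agree[where D=C])
      fix k show "(inv f ^^ k) x \<in> C" using True by (induction k) (auto simp: Ci)
    next
      fix z assume "z \<in> C" then show "f2 z = inv f z" unfolding f2_def by simp
    qed
    then show ?thesis using ci by simp
  next
    case False
    show ?thesis
    proof (rule cyc_agree[where D="-C"])
      fix k show "(f ^^ k) x \<in> - C" using False by (induction k) (auto simp: Cf)
    next
      fix z assume "z \<in> - C" then show "f2 z = f z" unfolding f2_def by simp
    qed
  qed
  have "inj f2"
  proof (rule injI)
    fix a c assume e: "f2 a = f2 c"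
    show "a = c"
    proof (cases "a \<in> C"; cases "c \<in> C")
      assume "a \<in> C" "c \<in> C" then show ?thesis using e unfolding f2_def
        by (metis invr)
    next
      assume "a \<in> C" "c \<notin> C" then show ?thesis using e Ci Cf unfolding f2_def by metis
    next
      assume "a \<notin> C" "c \<in> C" then show ?thesis using e Ci Cf unfolding f2_def by metis
    next
      assume "a \<notin> C" "c \<notin> C" then show ?thesis using e unfolding f2_def by (metis invl)
    qed
  qed
  moreover have "surj f2"
  proof -
    have "z \<in> range f2" for z
    proof (cases "z \<in> C")
      case True then have "f2 (f z) = z" unfolding f2_def using Cf invl by simp
      then show ?thesis by (metis rangeI)
    next
      case False then have "f2 (inv f z) = z" unfolding f2_def using Ci invr by simp
      then show ?thesis by (metis rangeI)
    qed
    then show ?thesis by blast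
  qed
  moreover have "finite {x. f2 x \<noteq> x}"
  proof -
    have fC: "finite C" unfolding C_def cyc_orbit[OF p]
      by (rule finite_orbit[OF permutation_self_in_orbit[OF p]])
    have "{x. f2 x \<noteq> x} \<subseteq> {x. f x \<noteq> x} \<union> C" unfolding f2_def by auto
    then show ?thesis using fC permutation_finite_support[OF p] finite_subset by blast
  qed
  ultimately have "permutation f2" unfolding permutation by (simp add: bij_def)
  then show ?thesis using cy by blast
qed

lemma merge_lemma:
  assumes p: "permutation f" and d: "cyc f i \<noteq> cyc f j"
  shows "j \<in> cyc (f(i := f j, j := f i)) i"
proof -
  define f' where "f' = f(i := f j, j := f i)"
  have ji: "j \<notin> cyc f i" using d cyc_eq_iff[OF p] by blast
  have ij: "i \<noteq> j" using d by auto
  have jo: "j \<in> orbit f (f j)"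
    using permutation_orbit_step[OF p] permutation_self_in_orbit[OF p] by simp
  define L where "L = funpow_dist f (f j) j"
  have fL: "(f ^^ L) (f j) = j" unfolding L_def by (rule funpow_dist_prop[OF jo])
  have key: "t \<le> L \<Longrightarrow> (f' ^^ Suc t) i = (f ^^ t) (f j)" for t
  proof (induction t)
    case 0 then show ?case using ij by (simp add: f'_def)
  next
    case (Suc t)
    then have IH: "(f' ^^ Suc t) i = (f ^^ t) (f j)" by simp
    have n1: "(f ^^ t) (f j) \<noteq> j"
      using funpow_dist_least[of t f "f j" j] Suc.prems unfolding L_def by simp
    have "(f ^^ t) (f j) \<in> cyc f j"
      using funpow_cyc[of "Suc t" f j] by (simp add: funpow_swap1)
    then have n2: "(f ^^ t) (f j) \<noteq> i"
      using ji cyc_sym[OF p] by blast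
    have "(f' ^^ Suc (Suc t)) i = f' ((f' ^^ Suc t) i)" by simp
    also have "\<dots> = f ((f ^^ t) (f j))" using IH n1 n2 by (simp add: f'_def)
    also have "\<dots> = (f ^^ Suc t) (f j)" by simp
    finally show ?case .
  qed
  have "(f' ^^ Suc L) i = j" using key[of L] fL by simp
  then show ?thesis unfolding f'_def[symmetric] using funpow_cyc[of "Suc L" f' i] by simp
qed

lemma split_lemma:
  assumes p: "permutation f" and ij: "i \<noteq> j" and s: "j \<in> cyc f i"
  shows "j \<notin> cyc (f(i := f j, j := f i)) i"
proof -
  define f' where "f' = f(i := f j, j := f i)"
  have io: "i \<in> orbit f (f j)"
    using permutation_orbit_step[OF p] cyc_sym[OF p s] cyc_orbit[OF p] by simp
  define m where "m = funpow_dist f (f j) i"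
  have fm: "(f ^^ m) (f j) = i" unfolding m_def by (rule funpow_dist_prop[OF io])
  have nj: "(f ^^ t) (f j) \<noteq> j" if "t \<le> m" for t
  proof
    assume e: "(f ^^ t) (f j) = j"
    have "(f ^^ (m - t)) ((f ^^ t) (f j)) = (f ^^ (m - t + t)) (f j)"
      by (simp add: funpow_add)
    then have "(f ^^ m) (f j) = (f ^^ (m - t)) ((f ^^ t) (f j))"
      using that by simp
    then have e2: "(f ^^ (m - t)) j = i" using e fm by simp
    show False
    proof (cases "m - t")
      case 0 then show False using e2 ij by simp
    next
      case (Suc r)
      then have "(f ^^ r) (f j) = i" using e2 by (simp add: funpow_swap1)
      moreover have "r < m" using Suc by simp
      ultimately show False using funpow_dist_least[of r f "f j" i] unfolding m_def by simp
    qed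
  qed
  define P where "P = {(f ^^ t) (f j) | t. t \<le> m}"
  have inP: "(f' ^^ k) i \<in> P" for k
  proof (induction k)
    case 0 then show ?case unfolding P_def using fm by auto
  next
    case (Suc k)
    then obtain t where t: "t \<le> m" "(f' ^^ k) i = (f ^^ t) (f j)" unfolding P_def by auto
    show ?case
    proof (cases "t = m")
      case True
      then have "(f' ^^ Suc k) i = f j" using t fm by (simp add: f'_def)
      then show ?thesis unfolding P_def by (auto intro: exI[where x=0])
    next
      case False
      have "(f ^^ t) (f j) \<noteq> i"
        using funpow_dist_least[of t f "f j" i] False t(1) unfolding m_def by simp
      have "(f' ^^ Suc k) i = f' ((f ^^ t) (f j))" using t by simp
      also have "\<dots> = f ((f ^^ t) (f j))"
        using \<open>(f ^^ t) (f j) \<noteq> i\<close> nj[OF t(1)] by (simp add: f'_def)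
      finally have "(f' ^^ Suc k) i = (f ^^ Suc t) (f j)" by simp
      then show ?thesis unfolding P_def using False t(1)
        by (auto intro: exI[where x="Suc t"])
    qed
  qed
  have "j \<notin> P" unfolding P_def using nj by fastforce
  then show ?thesis using inP unfolding f'_def[symmetric] cyc_def by auto
qed

lemma fg_perm: "is_fatgraph G \<Longrightarrow> permutation (sig G)"
  unfolding is_fatgraph_def Let_def sectors_def
  by (metis finite_atLeastAtMost permutes_imp_permutation)

lemma flip_if_props:
  assumes "permutation (sig G)"
  shows "permutation (sig (flip_if b x G)) \<and> cyc (sig (flip_if b x G)) = cyc (sig G)
     \<and> nrib (flip_if b x G) = nrib G \<and> gam (flip_if b x G) = gam G"
  using flip_props[OF assms, of x] assms
  by (simp add: flip_if_def flip_vertex_def)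

lemma swap_props:
  "sig (swap_succ i j G) = (sig G)(i := sig G j, j := sig G i) \<and>
   nrib (swap_succ i j G) = nrib G \<and> gam (swap_succ i j G) = gam G"
  by (simp add: swap_succ_def)

lemma sig_swap: "sig (swap_succ i j G) = (sig G)(i := sig G j, j := sig G i)"
  by (simp add: swap_succ_def)

lemma card_pair_ge1: "1 \<le> card (h ` {i,j})"
  by (simp add: Suc_le_eq card_gt_0_iff)

lemma card_pair_le2: "card (h ` {i,j}) \<le> 2"
proof -
  have "card (h ` {i,j}) \<le> card {i,j}" by (rule card_image_le) simp
  also have "\<dots> \<le> 2" by (simp add: card_insert_if)
  finally show ?thesis .
qed

lemma swap_vert:
  assumes p: "permutation f" and fin: "finite S" and ij: "i \<in> S" "j \<in> S"
  shows "card (cyc (f(i := f j, j := f i)) ` S) \<le> card (cyc f ` S) + 1"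
  using swap_count[OF assms] card_pair_ge1[of "cyc f" i j]
    card_pair_le2[of "cyc (f(i := f j, j := f i))" i j] by linarith

lemma merge_vert:
  assumes p: "permutation f" and fin: "finite S" and ij: "i \<in> S" "j \<in> S"
    and d: "cyc f i \<noteq> cyc f j"
  shows "card (cyc (f(i := f j, j := f i)) ` S) + 1 \<le> card (cyc f ` S)"
proof -
  have m: "cyc (f(i := f j, j := f i)) i = cyc (f(i := f j, j := f i)) j"
    using merge_lemma[OF p d] cyc_eq_iff[OF perm_sw[OF p]] by blast
  have c1: "card (cyc (f(i := f j, j := f i)) ` {i,j}) = 1" using m by simp
  have c2: "card (cyc f ` {i,j}) = 2" using d by simp
  show ?thesis using swap_count[OF assms(1-4)] c1 c2 by linarith
qed

lemma reversal_props:
  assumes r: "reversal G H"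
  shows "nrib H = nrib G \<and> gam H = gam G \<and> num_vertices H \<le> num_vertices G + 1"
proof -
  have fg: "is_fatgraph G" using r by (simp add: reversal_def)
  have p: "permutation (sig G)" using fg by (rule fg_perm)
  have fin: "finite (sectors G)" by (simp add: sectors_def)
  obtain i j where ij: "i \<in> sectors G" "j \<in> sectors G"
    and cases: "gluing G i j H \<or> slicing G i j H \<or> half_flipping G i j H"
    using r unfolding reversal_def by blast
  have sw: "nrib (swap_succ i j K) = nrib K \<and> gam (swap_succ i j K) = gam K \<and>
      num_vertices (swap_succ i j K) \<le> num_vertices K + 1"
    if "permutation (sig K)" "nrib K = nrib G" for K
  proof -
    have "sectors K = sectors G" "sectors (swap_succ i j K) = sectors K"
      using that by (simp_all add: sectors_def swap_succ_def)
    then show ?thesis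
      using swap_vert[OF that(1) fin ij] swap_props[of i j K]
      by (simp add: num_vertices_def)
  qed
  have fl: "permutation (sig (flip_if b x K)) \<and> num_vertices (flip_if b x K) = num_vertices K
      \<and> nrib (flip_if b x K) = nrib K \<and> gam (flip_if b x K) = gam K"
    if "permutation (sig K)" for K b x
    using flip_if_props[OF that, of b x] by (simp add: num_vertices_def sectors_def)
  show ?thesis
  proof -
    { assume "gluing G i j H"
      then obtain fi fj where H: "H = swap_succ i j (flip_if fj j (flip_if fi i G))"
        unfolding gluing_def Let_def by blast
      have ?thesis using fl[OF p, of fi i] fl[of "flip_if fi i G" fj j] sw[of "flip_if fj j (flip_if fi i G)"]
        unfolding H by simp }
    moreover
    { assume "slicing G i j H"
      then have H: "H = swap_succ i j G" unfolding slicing_def by blast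
      have ?thesis using sw[OF p] unfolding H by simp }
    moreover
    { assume hf: "half_flipping G i j H"
      then have H: "H = swap_succ i j (flip_if True j (swap_succ i j G))"
        and same: "cyc (sig G) i = cyc (sig G) j" unfolding half_flipping_def by blast+
      define G1 where "G1 = swap_succ i j G"
      define G2 where "G2 = flip_if True j G1"
      have p1: "permutation (sig G1)" unfolding G1_def sig_swap using perm_sw[OF p] by simp
      have fl2: "permutation (sig G2) \<and> cyc (sig G2) = cyc (sig G1) \<and> num_vertices G2 = num_vertices G1
          \<and> nrib G2 = nrib G1 \<and> gam G2 = gam G1"
        unfolding G2_def using fl[OF p1, of True j] flip_if_props[OF p1, of True j] by simp
      have n1: "nrib G1 = nrib G \<and> gam G1 = gam G" unfolding G1_def by (simp add: swap_props)
      have ?thesis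
      proof (cases "i = j")
        case True
        have "swap_succ i j K = K" for K using True by (simp add: swap_succ_def)
        then show ?thesis unfolding H using fl[OF p, of True j] by simp
      next
        case False
        have "j \<in> cyc (sig G) i" using same self_cyc by metis
        then have "j \<notin> cyc (sig G1) i" using split_lemma[OF p False] unfolding G1_def sig_swap by simp
        then have d1: "cyc (sig G1) i \<noteq> cyc (sig G1) j" using self_cyc by metis
        have d2: "cyc (sig G2) i \<noteq> cyc (sig G2) j" using d1 fl2 by simp
        have v1: "num_vertices G1 \<le> num_vertices G + 1"
          using swap_vert[OF p fin ij] unfolding G1_def num_vertices_def sig_swap
          by (simp add: sectors_def swap_succ_def)
        have sec2: "sectors G2 = sectors G" using fl2 n1 by (simp add: sectors_def)
        have "card (cyc (sig H) ` sectors G2) + 1 \<le> card (cyc (sig G2) ` sectors G2)"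
          using merge_vert[OF conjunct1[OF fl2] _ _ _ d2] fin ij sec2
          unfolding H G2_def[symmetric] G1_def[symmetric] sig_swap by simp
        then have "num_vertices H + 1 \<le> num_vertices G2"
          unfolding num_vertices_def using sec2 H swap_props[of i j G2] G2_def G1_def
          by (simp add: sectors_def)
        then show ?thesis using v1 fl2 n1 unfolding H G2_def[symmetric] G1_def[symmetric]
          by (simp add: swap_props)
      qed }
    ultimately show ?thesis using cases by blast
  qed
qed

lemma genus_step: "reversal G H \<Longrightarrow> euler_genus G - 1 \<le> euler_genus H"
  using reversal_props[of G H] unfolding euler_genus_def num_boundaries_def sectors_def by simp

lemma genus_steps: "(reversal ^^ k) G H \<Longrightarrow> euler_genus G - int k \<le> euler_genus H"
proof (induction k arbitrary: H)
  case 0 then show ?case by simp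
next
  case (Suc k)
  then obtain Y where "(reversal ^^ k) G Y" "reversal Y H" by (metis relpowp_Suc_E)
  then show ?case using Suc.IH genus_step[of Y H] by fastforce
qed

theorem corollary1:
  fixes G :: fatgraph and g :: nat
  assumes "is_fatgraph G" and "unicellular G" and "euler_genus G = int g"
  shows "enat g \<le> r_distance G"
  unfolding r_distance_def
proof (rule INF_greatest)
  fix k assume "k \<in> {k. \<exists>H. (reversal ^^ k) G H \<and> plane_tree H}"
  then obtain H where "(reversal ^^ k) G H" "plane_tree H" by blast
  then have "int g - int k \<le> 0" using genus_steps assms(3) unfolding plane_tree_def by fastforce
  then show "enat g \<le> enat k" by simp
qed

end
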